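(* Let $\kappa\ge1$, $0\le s\le t<\infty$, and $E=e^{-c((t-s)^{1/\kappa}+s^{1/\kappa}-t^{1/\kappa})\Lambda_1}$. Then $E$ is either the identity operator or a Fourier multiplier with an $L^1$ kernel whose $L^1$ norm is bounded independently of $s,t$.
   Context: $\Lambda_1$ is the Fourier multiplier on $\mathbb R^d$ with symbol $\sum_i|\xi_i|$; $c>0$ is a fixed constant. *)

theory Defs
  imports "HOL-Analysis.Analysis"
begin

definition fourier_transform :: "(real^'n \<Rightarrow> complex) \<Rightarrow> real^'n \<Rightarrow> complex" where
  "fourier_transform K \<xi> = (LINT x|lborel. K x * cis (- (x \<bullet> \<xi>)))"

definition Lambda1_symbol :: "real^'n \<Rightarrow> real" where
  "Lambda1_symbol \<xi> = (\<Sum>i\<in>UNIV. \<bar>\<xi> $ i\<bar>)"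

definition E_symbol :: "real \<Rightarrow> real \<Rightarrow> real \<Rightarrow> real \<Rightarrow> real^'n \<Rightarrow> real" where
  "E_symbol c \<kappa> s t \<xi> =
     exp (- c * ((t - s) powr (1/\<kappa>) + s powr (1/\<kappa>) - t powr (1/\<kappa>)) * Lambda1_symbol \<xi>)"

definition multiplier_with_L1_kernel :: "(real^'n \<Rightarrow> real) \<Rightarrow> real \<Rightarrow> bool" where
  "multiplier_with_L1_kernel m M \<longleftrightarrow>
     (\<exists>K. integrable lborel K \<and>
          (\<forall>\<xi>. fourier_transform K \<xi> = complex_of_real (m \<xi>)) \<and>
          (LINT x|lborel. norm (K x)) \<le> M)"

end

theory Submission
  imports Defs "HOL-Complex_Analysis.Complex_Analysis"
begin

lemma cauchy_int_nonneg:
  fixes l :: real assumes l: "l > 0"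
  shows "integrable lborel (\<lambda>x::real. indicator {0..} x * (1 / (x\<^sup>2 + l\<^sup>2)))"
proof -
  have "(\<integral>\<^sup>+x. ennreal (1 / (x\<^sup>2 + l\<^sup>2)) * indicator {0..} x \<partial>lborel) = ennreal (pi/2/l - arctan (0/l)/l)"
  proof (rule nn_integral_FTC_atLeast)
    show "((\<lambda>x. arctan (x/l)/l) \<longlongrightarrow> pi/2/l) at_top"
    proof -
      have "filterlim (\<lambda>x. x * inverse l) at_top at_top"
        using l by (intro filterlim_at_top_mult_tendsto_pos[OF tendsto_const] filterlim_ident) auto
      then have "filterlim (\<lambda>x. x / l) at_top at_top" by (simp add: divide_inverse)
      then show ?thesis
        using l by (intro tendsto_intros filterlim_compose[OF tendsto_arctan_at_top]) auto
    qed
    show "DERIV (\<lambda>x. arctan (x/l)/l) x :> 1 / (x\<^sup>2 + l\<^sup>2)" for x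
    proof -
      have "l * (l * (l * l)) + l * (l * (x * x)) = (l*l)*(l*l+x*x)" by algebra
      moreover have "(l*l)*(l*l+x*x) > 0" using l by (intro mult_pos_pos) (auto intro: add_pos_nonneg)
      ultimately have p: "l * (l * (l * l)) + l * (l * (x * x)) \<noteq> 0" by (simp only:)
      show ?thesis using l p by (auto intro!: derivative_eq_intros simp: field_simps power2_eq_square)
    qed
  qed (use l in \<open>auto intro!: add_nonneg_pos\<close>)
  then have "(\<integral>\<^sup>+x. ennreal (indicator {0..} x * (1 / (x\<^sup>2 + l\<^sup>2))) \<partial>lborel) < \<infinity>"
    by (simp add: indicator_mult_ennreal mult.commute)
  then show ?thesis
    by (intro integrableI_nonneg) (auto simp: indicator_def)
qed

lemma cauchy_integrable:
  fixes l :: real assumes l: "l > 0"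
  shows "integrable lborel (\<lambda>x::real. 1 / (x\<^sup>2 + l\<^sup>2))"
proof -
  let ?h = "\<lambda>x::real. indicator {0..} x * (1 / (x\<^sup>2 + l\<^sup>2))"
  have i1: "integrable lborel ?h" by (rule cauchy_int_nonneg[OF l])
  have i2: "integrable lborel (\<lambda>x. ?h (0 + (-1) * x))"
    by (rule lborel_integrable_real_affine[OF i1]) simp
  have "integrable lborel (\<lambda>x. ?h x + ?h (0 + (-1) * x))" using i1 i2 by (rule Bochner_Integration.integrable_add)
  then show ?thesis
  proof (rule Bochner_Integration.integrable_bound)
    show "AE x in lborel. norm (1 / (x\<^sup>2 + l\<^sup>2)) \<le> norm (?h x + ?h (0 + (-1) * x))"
      using l by (auto simp: indicator_def add_pos_nonneg)
  qed simp
qed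

lemma seg_ReIm:
  assumes "z \<in> closed_segment a b"
  shows "\<exists>u. 0 \<le> u \<and> u \<le> 1 \<and> Re z = (1-u)*Re a + u*Re b \<and> Im z = (1-u)*Im a + u*Im b"
  using assms by (auto simp: closed_segment_def scaleR_conv_of_real)

lemma tri_segs:
  fixes R l :: real assumes l: "l > 0" and R: "R > l"
  shows "\<i>*l \<notin> closed_segment (-of_real R) (of_real R)"
        "\<i>*l \<notin> closed_segment (of_real R) (\<i>*R)"
        "\<i>*l \<notin> closed_segment (\<i>*R) (-of_real R)"
proof -
  show "\<i>*l \<notin> closed_segment (-of_real R) (of_real R)"
    using seg_ReIm[of "\<i>*l" "-of_real R" "of_real R"] l by auto
  show "\<i>*l \<notin> closed_segment (of_real R) (\<i>*R)"
  proof
    assume "\<i>*l \<in> closed_segment (of_real R) (\<i>*R)"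
    then obtain u where u: "0 \<le> u" "u \<le> 1" "0 = (1-u)*R" "l = u*R"
      using seg_ReIm by fastforce
    then have "u = 1" using R l by auto
    then show False using u R by simp
  qed
  show "\<i>*l \<notin> closed_segment (\<i>*R) (-of_real R)"
  proof
    assume "\<i>*l \<in> closed_segment (\<i>*R) (-of_real R)"
    then obtain u where u: "0 \<le> u" "u \<le> 1" "0 = u*(-R)" "l = (1-u)*R"
      using seg_ReIm by fastforce
    then have "u = 0" using R l by auto
    then show False using u R by simp
  qed
qed

lemma tri_facts:
  fixes R l :: real assumes l: "l > 0" and R: "R > l"
  shows "winding_number (linepath (-of_real R) (of_real R) +++ linepath (of_real R) (\<i>*R) +++ linepath (\<i>*R) (-of_real R)) (\<i>*l) = 1"
proof -
  note seg1 = tri_segs(1)[OF l R] and seg2 = tri_segs(2)[OF l R] and seg3 = tri_segs(3)[OF l R]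
  have hull: "\<i>*l \<in> convex hull {-of_real R, of_real R, \<i>*R}"
  proof -
    let ?w = "l/R" let ?u = "(1 - l/R)/2"
    have "\<i>*l = ?u *\<^sub>R (-of_real R) + ?u *\<^sub>R (of_real R) + ?w *\<^sub>R (\<i>*R)"
      using R l by (simp add: complex_eq_iff scaleR_conv_of_real)
    moreover have "0 \<le> ?u" "0 \<le> ?w" "?u + ?u + ?w = 1" using R l by (auto simp: field_simps)
    ultimately show ?thesis unfolding convex_hull_3 by blast
  qed
  have int: "\<i>*l \<in> interior (convex hull {-of_real R, of_real R, \<i>*R})"
    using hull seg1 seg2 seg3 by (subst interior_of_triangle) (auto simp: segment_convex_hull insert_commute)
  show ?thesis
    using winding_number_triangle[OF int] R l by simp
qed

lemma f_bound_seg: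
  fixes R l \<omega> :: real and z :: complex
  assumes l: "l > 0" and R: "R \<ge> 2*l" and om: "\<omega> \<ge> 0" and Im: "Im z \<ge> 0" and nz: "(cmod z)\<^sup>2 \<ge> R\<^sup>2/2"
  shows "norm (exp (\<i> * of_real \<omega> * z) / (z\<^sup>2 + (of_real l)\<^sup>2)) \<le> 4 / R\<^sup>2"
proof -
  have e: "norm (exp (\<i> * of_real \<omega> * z)) \<le> 1"
    using om Im by (simp add: mult_nonneg_nonneg)
  have "R\<^sup>2/4 \<le> R\<^sup>2/2 - l\<^sup>2"
  proof -
    have "4*l\<^sup>2 \<le> R\<^sup>2" using R l by (metis power2_le_iff_abs_le abs_of_nonneg mult_2 power_mult_distrib numeral_Bit0 power2_eq_square less_le_not_le add_increasing mult_nonneg_nonneg nle_le zero_le_numeral order_trans[OF _ R] less_imp_le  real_sqrt_four)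
    then show ?thesis by simp
  qed
  also have "\<dots> \<le> (cmod z)\<^sup>2 - l\<^sup>2" using nz by simp
  also have "\<dots> \<le> norm (z\<^sup>2 + (of_real l)\<^sup>2)"
  proof -
    have "norm (z\<^sup>2) \<le> norm (z\<^sup>2 + (of_real l)\<^sup>2) + norm ((of_real l :: complex)\<^sup>2)"
      by (metis add_diff_cancel_right' norm_triangle_ineq4)
    then show ?thesis by (simp add: norm_power)
  qed
  finally have d: "R\<^sup>2/4 \<le> norm (z\<^sup>2 + (of_real l)\<^sup>2)" .
  have Rp: "R\<^sup>2/4 > 0" using R l by simp
  have "norm (exp (\<i> * of_real \<omega> * z) / (z\<^sup>2 + (of_real l)\<^sup>2)) = norm (exp (\<i> * of_real \<omega> * z)) / norm (z\<^sup>2 + (of_real l)\<^sup>2)"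
    by (simp add: norm_divide)
  also have "\<dots> \<le> 1 / (R\<^sup>2/4)"
    using e d Rp by (intro frac_le) auto
  finally show ?thesis by simp
qed

lemma contour_main:
  fixes R l \<omega> :: real
  assumes l: "l > 0" and R: "R \<ge> 2*l" and om: "\<omega> \<ge> 0"
  shows "\<exists>J. ((\<lambda>x::real. exp (\<i> * of_real \<omega> * of_real x) / ((of_real x)\<^sup>2 + (of_real l)\<^sup>2)) has_integral J) {-R..R}
             \<and> norm (J - of_real (pi * exp (- \<omega> * l) / l)) \<le> 16 / R"
proof -
  define f where "f z = exp (\<i> * of_real \<omega> * z) / (z\<^sup>2 + (of_real l)\<^sup>2)" for z
  define g where "g z = exp (\<i> * of_real \<omega> * z) / (z + \<i> * l)" for z
  define S where "S = {z. Im z > -l}"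
  have Rl: "R > l" "R > 0" using R l by auto
  let ?a = "-of_real R :: complex" let ?b = "of_real R :: complex" let ?c = "\<i>*R"
  define \<gamma> where "\<gamma> = linepath ?a ?b +++ linepath ?b ?c +++ linepath ?c ?a"
  have fg: "g w / (w - \<i>*l) = f w" for w
  proof -
    have "w\<^sup>2 + (of_real l)\<^sup>2 = (w + \<i>*l) * (w - \<i>*l)"
      by (simp add: power2_eq_square algebra_simps)
    then show ?thesis unfolding f_def g_def by simp
  qed
  have segIm: "Im z \<ge> 0" if "z \<in> path_image \<gamma>" for z
    using that unfolding \<gamma>_def
    using Rl by (auto simp: path_image_join dest!: seg_ReIm intro!: add_nonneg_nonneg mult_nonneg_nonneg)
  have notil: "z \<noteq> \<i>*l" if "z \<in> path_image \<gamma>" for z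
    using that tri_segs[OF l Rl(1)] unfolding \<gamma>_def by (auto simp: path_image_join)
  have vp: "valid_path \<gamma>" unfolding \<gamma>_def by (auto intro!: valid_path_join)
  have cl: "pathfinish \<gamma> = pathstart \<gamma>" unfolding \<gamma>_def by simp
  have hol: "g holomorphic_on S"
    unfolding g_def S_def
  proof (intro holomorphic_intros)
    fix z assume "z \<in> {z. - l < Im z}"
    then have "Im (z + \<i>*l) > 0" by simp
    show "z + \<i>*l \<noteq> 0"
    proof
      assume "z + \<i>*l = 0"
      then have "Im (z + \<i>*l) = 0" by simp
      with \<open>Im (z + \<i>*l) > 0\<close> show False by simp
    qed
  qed
  have cS: "convex S" unfolding S_def using convex_halfspace_Im_gt .
  have iS: "\<i>*l \<in> interior S" unfolding S_def using l
    by (simp add: interior_open open_halfspace_Im_gt)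
  have pS: "path_image \<gamma> \<subseteq> S - {\<i>*l}"
    using segIm notil l unfolding S_def by force
  have "((\<lambda>w. g w / (w - \<i>*l)) has_contour_integral (2*pi * \<i> * winding_number \<gamma> (\<i>*l) * g (\<i>*l))) \<gamma>"
    by (rule Cauchy_integral_formula_convex_simple[OF cS hol iS vp pS cl])
  moreover have "winding_number \<gamma> (\<i>*l) = 1" unfolding \<gamma>_def by (rule tri_facts[OF l Rl(1)])
  moreover have "2*pi * \<i> * 1 * g (\<i>*l) = of_real (pi * exp (- \<omega> * l) / l)"
  proof -
    have e: "exp (- (complex_of_real \<omega> * complex_of_real l)) = of_real (exp (-(\<omega> * l)))"
      by (metis exp_of_real of_real_minus of_real_mult)
    show ?thesis using l unfolding g_def by (simp add: field_simps e of_real_mult)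
  qed
  ultimately have full: "(f has_contour_integral of_real (pi * exp (- \<omega> * l) / l)) \<gamma>"
    by (simp add: fg)
  have nz: "z\<^sup>2 + (of_real l)\<^sup>2 \<noteq> 0" if "z \<in> path_image \<gamma>" for z
  proof
    assume "z\<^sup>2 + (of_real l)\<^sup>2 = 0"
    then have "(z + \<i>*l) * (z - \<i>*l) = 0" by (simp add: power2_eq_square algebra_simps)
    then have "z + \<i>*l = 0 \<or> z - \<i>*l = 0" by (simp only: mult_eq_0_iff)
    then have "z = -(\<i>*l) \<or> z = \<i>*l" by (auto simp: eq_neg_iff_add_eq_0)
    then show False using segIm[OF that] notil[OF that] l by auto
  qed
  have cont: "continuous_on (path_image \<gamma>) f"
    unfolding f_def using nz by (intro continuous_intros) auto
  have sub1: "closed_segment ?a ?b \<subseteq> path_image \<gamma>" and sub2: "closed_segment ?b ?c \<subseteq> path_image \<gamma>"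
    and sub3: "closed_segment ?c ?a \<subseteq> path_image \<gamma>"
    unfolding \<gamma>_def by (auto simp: path_image_join)
  obtain J1 where J1: "(f has_contour_integral J1) (linepath ?a ?b)"
    using contour_integrable_continuous_linepath[OF continuous_on_subset[OF cont sub1]]
    by (auto simp: contour_integrable_on_def)
  obtain J2 where J2: "(f has_contour_integral J2) (linepath ?b ?c)"
    using contour_integrable_continuous_linepath[OF continuous_on_subset[OF cont sub2]]
    by (auto simp: contour_integrable_on_def)
  obtain J3 where J3: "(f has_contour_integral J3) (linepath ?c ?a)"
    using contour_integrable_continuous_linepath[OF continuous_on_subset[OF cont sub3]]
    by (auto simp: contour_integrable_on_def)
  have "(f has_contour_integral (J1 + (J2 + J3))) \<gamma>"
    unfolding \<gamma>_def
    by (intro has_contour_integral_join J1 J2 J3 valid_path_join) auto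
  then have sumJ: "J1 + (J2 + J3) = of_real (pi * exp (- \<omega> * l) / l)"
    using full has_contour_integral_unique by blast
  have big: "(cmod z)\<^sup>2 \<ge> R\<^sup>2/2" if zs: "z \<in> closed_segment ?b ?c \<or> z \<in> closed_segment ?c ?a" for z
  proof -
    have "\<exists>u. 0 \<le> u \<and> u \<le> 1 \<and> ((Re z = (1-u)*R \<and> Im z = u*R) \<or> (Re z = - (u*R) \<and> Im z = (1-u)*R))"
      using zs by (auto dest!: seg_ReIm)
    then obtain u where u: "0 \<le> u" "u \<le> 1" and "(Re z = (1-u)*R \<and> Im z = u*R) \<or> (Re z = - (u*R) \<and> Im z = (1-u)*R)"
      by blast
    then have a: "(cmod z)\<^sup>2 = R\<^sup>2 * ((1-u)\<^sup>2 + u\<^sup>2)"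
      unfolding cmod_power2 by (elim disjE conjE) (simp_all (no_asm_simp) add: power2_eq_square algebra_simps)
    have b: "(1-u)\<^sup>2 + u\<^sup>2 \<ge> 1/2"
    proof -
      have "(1-u)\<^sup>2 + u\<^sup>2 - 1/2 = 2*(u-1/2)\<^sup>2" by (simp add: power2_eq_square algebra_simps)
      then show ?thesis by (smt (verit) zero_le_power2)
    qed
    show ?thesis
    proof -
      have "R\<^sup>2 * (1/2) \<le> R\<^sup>2 * ((1-u)\<^sup>2 + u\<^sup>2)" using b by (intro mult_left_mono) auto
      then show ?thesis using a by simp
    qed
  qed
  have bnd: "norm (f z) \<le> 4 / R\<^sup>2" if "z \<in> closed_segment ?b ?c \<or> z \<in> closed_segment ?c ?a" for z
    unfolding f_def
  proof (rule f_bound_seg[OF l R om])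
    show "0 \<le> Im z" using that sub2 sub3 segIm by blast
    show "R\<^sup>2/2 \<le> (cmod z)\<^sup>2" using big that by blast
  qed
  have len: "norm (?c - ?b) \<le> 2*R" "norm (?a - ?c) \<le> 2*R"
  proof -
    have "norm (?c - ?b) \<le> norm ?c + norm ?b" by (rule norm_triangle_ineq4)
    then show "norm (?c - ?b) \<le> 2*R" using Rl by (simp add: norm_mult)
    have "norm (?a - ?c) \<le> norm ?a + norm ?c" by (rule norm_triangle_ineq4)
    then show "norm (?a - ?c) \<le> 2*R" using Rl by (simp add: norm_mult)
  qed
  have B0: "0 \<le> 4 / R\<^sup>2" by simp
  have nJ2: "norm J2 \<le> 8 / R"
  proof -
    have "norm J2 \<le> 4 / R\<^sup>2 * norm (?c - ?b)"
      using has_contour_integral_bound_linepath[OF J2 B0] bnd by blast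
    also have "\<dots> \<le> 4 / R\<^sup>2 * (2*R)" using len B0 by (intro mult_left_mono) auto
    also have "\<dots> = 8 / R" using Rl by (simp add: power2_eq_square field_simps)
    finally show ?thesis .
  qed
  have nJ3: "norm J3 \<le> 8 / R"
  proof -
    have "norm J3 \<le> 4 / R\<^sup>2 * norm (?a - ?c)"
      using has_contour_integral_bound_linepath[OF J3 B0] bnd by blast
    also have "\<dots> \<le> 4 / R\<^sup>2 * (2*R)" using len B0 by (intro mult_left_mono) auto
    also have "\<dots> = 8 / R" using Rl by (simp add: power2_eq_square field_simps)
    finally show ?thesis .
  qed
  have "((\<lambda>x. f (of_real x)) has_integral J1) {Re ?a..Re ?b}"
    using J1 Rl by (subst has_contour_integral_linepath_Reals_iff[symmetric]) auto
  then have hi: "((\<lambda>x::real. exp (\<i> * of_real \<omega> * of_real x) / ((of_real x)\<^sup>2 + (of_real l)\<^sup>2)) has_integral J1) {-R..R}"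
    by (simp add: f_def)
  have "norm (J1 - of_real (pi * exp (- \<omega> * l) / l)) = norm (J2 + J3)"
    unfolding sumJ[symmetric] by (simp add: norm_minus_commute add.commute)
  also have "\<dots> \<le> norm J2 + norm J3" by (rule norm_triangle_ineq)
  also have "\<dots> \<le> 16 / R" using nJ2 nJ3 by simp
  finally show ?thesis using hi by blast
qed

lemma F_integrable:
  fixes l \<omega> :: real assumes l: "l > 0"
  shows "integrable lborel (\<lambda>x::real. exp (\<i> * of_real \<omega> * of_real x) / ((of_real x)\<^sup>2 + (of_real l)\<^sup>2))"
proof (rule Bochner_Integration.integrable_bound[OF cauchy_integrable[OF l]])
  show "(\<lambda>x::real. exp (\<i> * of_real \<omega> * of_real x) / ((of_real x)\<^sup>2 + (of_real l)\<^sup>2)) \<in> borel_measurable lborel"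
    by measurable
  show "AE x in lborel. norm (exp (\<i> * of_real \<omega> * of_real x) / ((of_real x)\<^sup>2 + (of_real l)\<^sup>2)) \<le> norm (1 / (x\<^sup>2 + l\<^sup>2))"
  proof (rule AE_I2)
    fix x :: real
    have "x\<^sup>2 + l\<^sup>2 > 0" using l by (simp add: add_nonneg_pos)
    have "(of_real x)\<^sup>2 + (of_real l)\<^sup>2 = (of_real (x\<^sup>2 + l\<^sup>2) :: complex)" by simp
    then have "norm ((of_real x)\<^sup>2 + (of_real l :: complex)\<^sup>2) = x\<^sup>2 + l\<^sup>2"
      using \<open>x\<^sup>2 + l\<^sup>2 > 0\<close> by (simp only: norm_of_real)
    moreover have "norm (exp (\<i> * of_real \<omega> * of_real x)) = 1"
      by (metis norm_exp_i_times of_real_mult mult.assoc)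
    moreover have "x\<^sup>2 + l\<^sup>2 > 0" using l by (simp add: add_nonneg_pos)
    ultimately show "norm (exp (\<i> * of_real \<omega> * of_real x) / ((of_real x)\<^sup>2 + (of_real l)\<^sup>2)) \<le> norm (1 / (x\<^sup>2 + l\<^sup>2))"
      by (simp add: norm_divide)
  qed
qed

lemma fourier1_pos:
  fixes l \<omega> :: real assumes l: "l > 0" and om: "\<omega> \<ge> 0"
  shows "(LINT x|lborel. exp (\<i> * of_real \<omega> * of_real x) / ((of_real x)\<^sup>2 + (of_real l)\<^sup>2)) = of_real (pi * exp (- \<omega> * l) / l)"
proof -
  define F where "F x = exp (\<i> * of_real \<omega> * of_real x) / ((of_real x)\<^sup>2 + (of_real l)\<^sup>2)" for x :: real
  have iF: "integrable lborel F" unfolding F_def by (rule F_integrable[OF l])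
  define w where "w x = norm (F x)" for x
  have "(\<lambda>n::nat. LINT x|lborel. indicator {-real n..real n} x *\<^sub>R F x) \<longlonglongrightarrow> (LINT x|lborel. F x)"
  proof (rule integral_dominated_convergence[where w = w])
    show "F \<in> borel_measurable lborel" using iF by auto
    show "(\<lambda>x. indicator {-real n..real n} x *\<^sub>R F x) \<in> borel_measurable lborel" for n
      using iF by auto
    show "integrable lborel w" unfolding w_def using iF by auto
    show "AE x in lborel. (\<lambda>n. indicator {-real n..real n} x *\<^sub>R F x) \<longlonglongrightarrow> F x"
    proof (rule AE_I2)
      fix x :: real
      obtain N :: nat where N: "\<bar>x\<bar> \<le> real N" using real_arch_simple by blast
      have "eventually (\<lambda>n. indicator {-real n..real n} x *\<^sub>R F x = F x) sequentially"
        using eventually_ge_at_top[of N]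
        by eventually_elim (use N in \<open>auto simp: indicator_def\<close>)
      then show "(\<lambda>n. indicator {-real n..real n} x *\<^sub>R F x) \<longlonglongrightarrow> F x"
        by (rule tendsto_eventually)
    qed
    show "AE x in lborel. norm (indicator {-real n..real n} x *\<^sub>R F x) \<le> w x" for n
      by (auto simp: w_def indicator_def)
  qed
  moreover have "(\<lambda>n::nat. LINT x|lborel. indicator {-real n..real n} x *\<^sub>R F x) \<longlonglongrightarrow> of_real (pi * exp (- \<omega> * l) / l)"
  proof -
    let ?L = "of_real (pi * exp (- \<omega> * l) / l) :: complex"
    have ev: "eventually (\<lambda>n::nat. norm ((LINT x|lborel. indicator {-real n..real n} x *\<^sub>R F x) - ?L) \<le> 16 / real n) sequentially"
    proof -
      obtain N :: nat where N: "2*l \<le> real N" using real_arch_simple by blast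
      show ?thesis using eventually_ge_at_top[of N]
      proof eventually_elim
        case (elim n)
        then have R: "real n \<ge> 2*l" using N by linarith
        obtain J where J: "(F has_integral J) {-real n..real n}" and nJ: "norm (J - ?L) \<le> 16 / real n"
          using contour_main[OF l R om] unfolding F_def by blast
        have si: "set_integrable lborel {-real n..real n} F"
          unfolding set_integrable_def using iF by (intro integrable_mult_indicator) auto
        have "(LINT x|lborel. indicator {-real n..real n} x *\<^sub>R F x) = integral {-real n..real n} F"
          using set_borel_integral_eq_integral(2)[OF si] by (simp add: set_lebesgue_integral_def)
        also have "\<dots> = J" using J by (rule integral_unique)
        finally show ?case using nJ by simp
      qed
    qed
    have "(\<lambda>n::nat. 16 / real n) \<longlonglongrightarrow> 0"
      by (intro tendsto_divide_0[OF tendsto_const] filterlim_at_top_imp_at_infinity[OF filterlim_real_sequentially])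
    then have "(\<lambda>n::nat. (LINT x|lborel. indicator {-real n..real n} x *\<^sub>R F x) - ?L) \<longlonglongrightarrow> 0"
      by (rule Lim_null_comparison[OF ev])
    then show ?thesis by (simp add: LIM_zero_iff)
  qed
  ultimately show ?thesis unfolding F_def[symmetric] using LIMSEQ_unique by blast
qed

lemma fourier1_all:
  fixes l a :: real assumes l: "l > 0"
  shows "(LINT x|lborel. exp (\<i> * of_real a * of_real x) / ((of_real x)\<^sup>2 + (of_real l)\<^sup>2)) = of_real (pi * exp (- \<bar>a\<bar> * l) / l)"
proof (cases "a \<ge> 0")
  case True then show ?thesis using fourier1_pos[OF l True] by simp
next
  case False
  have "(LINT x|lborel. exp (\<i> * of_real a * of_real x) / ((of_real x)\<^sup>2 + (of_real l)\<^sup>2)) =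
        \<bar>-1\<bar> *\<^sub>R (LINT x|lborel. exp (\<i> * of_real a * of_real (0 + (-1) * x)) / ((of_real (0 + (-1) * x))\<^sup>2 + (of_real l)\<^sup>2))"
    by (rule lborel_integral_real_affine) simp
  also have "\<dots> = (LINT x|lborel. exp (\<i> * of_real (-a) * of_real x) / ((of_real x)\<^sup>2 + (of_real l)\<^sup>2))"
    by simp
  also have "\<dots> = of_real (pi * exp (- (-a) * l) / l)"
    using False by (intro fourier1_pos[OF l]) auto
  finally show ?thesis using False by simp
qed

lemma fourier_1d:
  fixes l \<omega> :: real assumes l: "l > 0"
  shows "integrable lborel (\<lambda>x. complex_of_real (l/pi/(x\<^sup>2+l\<^sup>2)) * cis (-(x*\<omega>)))"
    and "(LINT x|lborel. complex_of_real (l/pi/(x\<^sup>2+l\<^sup>2)) * cis (-(x*\<omega>))) = complex_of_real (exp (-(l*\<bar>\<omega>\<bar>)))"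
proof -
  have eq: "complex_of_real (l/pi/(x\<^sup>2+l\<^sup>2)) * cis (-(x*\<omega>)) =
            of_real (l/pi) * (exp (\<i> * of_real (-\<omega>) * of_real x) / ((of_real x)\<^sup>2 + (of_real l)\<^sup>2))" for x
    by (simp add: cis_conv_exp mult.commute mult.left_commute)
  show "integrable lborel (\<lambda>x. complex_of_real (l/pi/(x\<^sup>2+l\<^sup>2)) * cis (-(x*\<omega>)))"
    unfolding eq by (intro integrable_mult_right F_integrable[OF l])
  have "(LINT x|lborel. complex_of_real (l/pi/(x\<^sup>2+l\<^sup>2)) * cis (-(x*\<omega>))) =
        of_real (l/pi) * (LINT x|lborel. exp (\<i> * of_real (-\<omega>) * of_real x) / ((of_real x)\<^sup>2 + (of_real l)\<^sup>2))"
    unfolding eq by (rule integral_mult_right_zero)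
  also have "\<dots> = of_real (l/pi) * of_real (pi * exp (- \<bar>\<omega>\<bar> * l) / l)"
    using fourier1_all[OF l, of "-\<omega>"] by simp
  also have "\<dots> = complex_of_real (exp (-(l*\<bar>\<omega>\<bar>)))"
    using l by (simp add: field_simps flip: of_real_mult)
  finally show "(LINT x|lborel. complex_of_real (l/pi/(x\<^sup>2+l\<^sup>2)) * cis (-(x*\<omega>))) = complex_of_real (exp (-(l*\<bar>\<omega>\<bar>)))" .
qed


lemma lborel_prod_int:
  fixes f :: "'a::euclidean_space \<Rightarrow> real \<Rightarrow> 'b::{real_normed_field,banach,second_countable_topology}"
  assumes int: "\<And>b. b \<in> Basis \<Longrightarrow> integrable lborel (f b)"
  shows "integrable lborel (\<lambda>x::'a. \<Prod>b\<in>Basis. f b (x \<bullet> b))"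
    and "(LINT x|lborel. (\<Prod>b\<in>Basis. f b (x \<bullet> b))) = (\<Prod>b\<in>Basis. LINT y|lborel. f b y)"
proof -
  interpret product_sigma_finite "\<lambda>_::'a. lborel" by standard
  have fm[measurable]: "f b \<in> borel_measurable borel" if "b \<in> Basis" for b
    using int[OF that] by (simp add: borel_measurable_integrable measurable_lborel2 del: measurable_lborel1)
  have Tm: "(\<lambda>g. \<Sum>b\<in>Basis. g b *\<^sub>R b) \<in> measurable (\<Pi>\<^sub>M b\<in>(Basis::'a set). lborel) (borel :: 'a measure)"
    by measurable
  have Fm: "(\<lambda>x::'a. \<Prod>b\<in>Basis. f b (x \<bullet> b)) \<in> borel_measurable borel"
    by measurable
  have L: "(lborel::'a measure) = distr (\<Pi>\<^sub>M b\<in>Basis. lborel) borel (\<lambda>g. \<Sum>b\<in>Basis. g b *\<^sub>R b)"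
    by (rule lborel_eq)
  have comp: "(\<Prod>b\<in>Basis. f b ((\<Sum>b'\<in>Basis. g b' *\<^sub>R b') \<bullet> b)) = (\<Prod>b\<in>Basis. f b (g b))" for g :: "'a \<Rightarrow> real"
    by (simp cong: prod.cong)
  show "integrable lborel (\<lambda>x::'a. \<Prod>b\<in>Basis. f b (x \<bullet> b))"
    unfolding L
    unfolding integrable_distr_eq[OF Tm Fm] comp
    by (rule product_integrable_prod) (auto intro: int)
  show "(LINT x|lborel. (\<Prod>b\<in>Basis. f b (x \<bullet> b))) = (\<Prod>b\<in>Basis. LINT y|lborel. f b y)"
    unfolding L
    unfolding integral_distr[OF Tm Fm] comp
    by (rule product_integral_prod) (auto intro: int)
qed

lemma sum_Basis_vec:
  fixes h :: "real^'n \<Rightarrow> 'b::comm_monoid_add"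
  shows "(\<Sum>b\<in>Basis. h b) = (\<Sum>i\<in>UNIV. h (axis i 1))"
proof -
  have B: "(Basis :: (real^'n) set) = (\<lambda>i. axis i 1) ` UNIV"
    by (auto simp: Basis_vec_def)
  have "inj (\<lambda>i::'n. axis i (1::real))" by (auto simp: inj_on_def axis_eq_axis)
  then show ?thesis unfolding B by (simp add: sum.reindex)
qed



lemma cis_neg_sum:
  assumes "finite A"
  shows "cis (-(\<Sum>b\<in>A. g b)) = (\<Prod>b\<in>A. cis (-(g b)))"
  using assms
proof (induction A rule: finite_induct)
  case empty then show ?case by simp
next
  case (insert x F)
  have e1: "(\<Sum>b\<in>insert x F. g b) = g x + (\<Sum>b\<in>F. g b)" using insert by simp
  have e2: "cis (-(g x + (\<Sum>b\<in>F. g b))) = cis (-g x) * cis (-(\<Sum>b\<in>F. g b))"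
    by (metis cis_mult minus_add_distrib)
  have "cis (-(\<Sum>b\<in>insert x F. g b)) = cis (-g x) * cis (-(\<Sum>b\<in>F. g b))"
    unfolding e1 e2 ..
  then show ?case using insert by simp
qed

lemma powr_subadd:
  fixes x y p :: real
  assumes x: "x \<ge> 0" and y: "y \<ge> 0" and p: "0 < p" "p \<le> 1"
  shows "(x + y) powr p \<le> x powr p + y powr p"
proof (cases "x + y = 0")
  case True then show ?thesis using x y by simp
next
  case False
  define T where "T = x + y"
  have T: "T > 0" using False x y unfolding T_def by simp
  have u: "x/T \<le> (x/T) powr p" "y/T \<le> (y/T) powr p"
  proof -
    have "(x/T) powr 1 \<le> (x/T) powr p"
      using x y T p by (intro powr_mono') (auto simp: T_def)
    then show "x/T \<le> (x/T) powr p" using x T by simp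
    have "(y/T) powr 1 \<le> (y/T) powr p"
      using x y T p by (intro powr_mono') (auto simp: T_def)
    then show "y/T \<le> (y/T) powr p" using y T by simp
  qed
  have "1 = x/T + y/T" using T by (simp add: T_def add_divide_distrib[symmetric])
  also have "\<dots> \<le> (x/T) powr p + (y/T) powr p" using u by simp
  also have "\<dots> = (x powr p + y powr p) / T powr p" by (simp add: powr_divide add_divide_distrib)
  finally have "T powr p \<le> x powr p + y powr p" using T by (simp add: field_simps)
  then show ?thesis by (simp add: T_def)
qed

lemma key_kernel:
  fixes l :: real assumes l: "l > 0"
  shows "multiplier_with_L1_kernel (\<lambda>\<xi>::real^'n. exp (-(l * Lambda1_symbol \<xi>))) 1"
proof -
  define k where "k y = l/pi/(y\<^sup>2+l\<^sup>2)" for y :: real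
  define K where "K x = (\<Prod>b\<in>Basis. complex_of_real (k (x \<bullet> b)))" for x :: "real^'n"
  have ik: "integrable lborel (\<lambda>y. complex_of_real (k y))"
    using fourier_1d(1)[OF l, of 0] by (simp add: k_def)
  have ikr: "integrable lborel k"
  proof -
    have "integrable lborel (\<lambda>y. (l/pi) * (1/(y\<^sup>2+l\<^sup>2)))"
      by (rule integrable_mult_right[OF cauchy_integrable[OF l]])
    moreover have "k = (\<lambda>y. (l/pi) * (1/(y\<^sup>2+l\<^sup>2)))" by (rule ext) (simp add: k_def)
    ultimately show ?thesis by simp
  qed
  have ik1: "(LINT y|lborel. k y) = 1"
  proof -
    have "(LINT y|lborel. complex_of_real (k y)) = 1"
      using fourier_1d(2)[OF l, of 0] by (simp add: k_def)
    then show ?thesis by simp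
  qed
  have intK: "integrable lborel K"
    unfolding K_def by (rule lborel_prod_int(1)) (rule ik)
  have ft: "fourier_transform K \<xi> = complex_of_real (exp (-(l * Lambda1_symbol \<xi>)))" for \<xi> :: "real^'n"
  proof -
    have eq: "K x * cis (- (x \<bullet> \<xi>)) = (\<Prod>b\<in>Basis. complex_of_real (k (x \<bullet> b)) * cis (- ((x \<bullet> b) * (\<xi> \<bullet> b))))" for x
      unfolding K_def euclidean_inner[of x \<xi>] by (simp add: cis_neg_sum prod.distrib)
    have "fourier_transform K \<xi> = (LINT x|lborel. (\<Prod>b\<in>Basis. complex_of_real (k (x \<bullet> b)) * cis (- ((x \<bullet> b) * (\<xi> \<bullet> b)))))"
      unfolding fourier_transform_def eq ..
    also have "\<dots> = (\<Prod>b\<in>Basis. LINT y|lborel. complex_of_real (k y) * cis (- (y * (\<xi> \<bullet> b))))"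
      by (rule lborel_prod_int(2)) (unfold k_def, rule fourier_1d(1)[OF l])
    also have "\<dots> = (\<Prod>b\<in>Basis. complex_of_real (exp (-(l * \<bar>\<xi> \<bullet> b\<bar>))))"
      by (intro prod.cong refl) (unfold k_def, rule fourier_1d(2)[OF l])
    also have "\<dots> = complex_of_real (exp (\<Sum>b\<in>Basis. -(l * \<bar>\<xi> \<bullet> b\<bar>)))"
      by (simp add: exp_sum)
    also have "(\<Sum>b\<in>Basis. -(l * \<bar>\<xi> \<bullet> b\<bar>)) = -(l * Lambda1_symbol \<xi>)"
      unfolding Lambda1_symbol_def sum_Basis_vec[of "\<lambda>b. -(l * \<bar>\<xi> \<bullet> b\<bar>)"]
      by (simp add: sum_negf sum_distrib_left cart_eq_inner_axis)
    finally show ?thesis .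
  qed
  have nK: "norm (K x) = (\<Prod>b\<in>Basis. k (x \<bullet> b))" for x
  proof -
    have "norm (K x) = (\<Prod>b\<in>Basis. norm (complex_of_real (k (x \<bullet> b))))"
      unfolding K_def by (rule prod_norm[symmetric])
    also have "\<dots> = (\<Prod>b\<in>Basis. k (x \<bullet> b))"
    proof (intro prod.cong refl)
      fix b :: "real^'n"
      have "k (x \<bullet> b) \<ge> 0" unfolding k_def using l by (simp add: add_nonneg_pos)
      then show "norm (complex_of_real (k (x \<bullet> b))) = k (x \<bullet> b)"
        by (simp only: norm_of_real abs_of_nonneg)
    qed
    finally show ?thesis .
  qed
  have "(LINT x|lborel. norm (K x)) = (\<Prod>b\<in>(Basis :: (real^'n) set). LINT y|lborel. k y)"
    unfolding nK by (rule lborel_prod_int(2)) (rule ikr)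
  also have "\<dots> = 1" by (simp add: ik1)
  finally have "(LINT x|lborel. norm (K x)) \<le> 1" by simp
  then show ?thesis
    unfolding multiplier_with_L1_kernel_def using intK ft by blast
qed

theorem lemma4p3:
  fixes c \<kappa> :: real
  assumes "c > 0" and "\<kappa> \<ge> 1"
  shows "\<exists>M. \<forall>s t. 0 \<le> s \<and> s \<le> t \<longrightarrow>
           ((\<forall>\<xi>::real^'n. E_symbol c \<kappa> s t \<xi> = 1) \<or>
            multiplier_with_L1_kernel (E_symbol c \<kappa> s t :: real^'n \<Rightarrow> real) M)"
proof (intro exI allI impI)
  fix s t :: real assume st: "0 \<le> s \<and> s \<le> t"
  define a where "a = (t - s) powr (1/\<kappa>) + s powr (1/\<kappa>) - t powr (1/\<kappa>)"
  have p: "0 < 1/\<kappa>" "1/\<kappa> \<le> 1" using assms by auto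
  have "((t - s) + s) powr (1/\<kappa>) \<le> (t - s) powr (1/\<kappa>) + s powr (1/\<kappa>)"
    using st p by (intro powr_subadd) auto
  then have a0: "a \<ge> 0" unfolding a_def by simp
  have E: "E_symbol c \<kappa> s t = (\<lambda>\<xi>::real^'n. exp (-((c * a) * Lambda1_symbol \<xi>)))"
    by (rule ext) (simp add: E_symbol_def a_def)
  show "(\<forall>\<xi>::real^'n. E_symbol c \<kappa> s t \<xi> = 1) \<or>
            multiplier_with_L1_kernel (E_symbol c \<kappa> s t :: real^'n \<Rightarrow> real) 1"
  proof (cases "a = 0")
    case True then show ?thesis using E by simp
  next
    case False
    then have "c * a > 0" using a0 assms by simp
    then show ?thesis unfolding E using key_kernel by blast
  qed
qed

end
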